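(* Let $\mathcal{A}=\{0,\dots,n\}$ and let $U$ be a real symmetric $(n+1)\times(n+1)$ payoff matrix of a symmetric game, with $u(x,y)=x^\top Uy$ and $v_\alpha(x)=u(\alpha,x)=(Ux)_\alpha$. Let $\eta>0$ and assume every solution of the inertial dynamics (ID) with interior initial position exists for all $t\ge0$. If $x^*\in\mathcal{X}=\Delta(\mathcal{A})$ is an evolutionarily stable state, then $x^*$ attracts all interior trajectories of (ID) that start near $x^*$ and with sufficiently low speed $\|\dot x(0)\|$, i.e. every such trajectory satisfies $\lim_{t\to\infty}x(t)=x^*$.
   Context: $\mathcal{X}=\{x\in\mathbb{R}^{n+1}:x_\alpha\ge0,\sum_\alpha x_\alpha=1\}$ with relative interior $\mathcal{X}^\circ$. $x^*\in\mathcal{X}$ is evolutionarily stable if there is a neighborhood $W$ of $x^*$ in $\mathcal{X}$ such that for all $x\in W$: $u(x^*,x^* )\ge u(x,x^* )$, and $u(x^*,x^* )=u(x,x^* )$ with $x\neq x^*$ implies $u(x^*,x)>u(x,x)$. A kernel is a $C^\infty$ function $\theta:[0,\infty)\to\mathbb{R}\cup\{+\infty\}$ with $\theta(x)<\infty$ for $x>0$, $\lim_{x\to0^+}\theta'(x)=-\infty$, $\theta''>0$, $\theta'''<0$ on $(0,\infty)$; fix one. With $\theta''_\alpha=\theta''(x_\alpha)$, $\theta'''_\alpha=\theta'''(x_\alpha)$, $\Theta''=(\sum_\beta1/\theta''_\beta)^{-1}$, the inertial dynamics (ID) on $\mathcal{X}^\circ$ are $$\ddot x_\alpha=\frac{1}{\theta''_\alpha}\Big[v_\alpha(x)-\sum_{\beta}\frac{\Theta''}{\theta''_\beta}v_\beta(x)\Big]-\frac{1}{2\theta''_\alpha}\Big[\theta'''_\alpha\dot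 x_\alpha^2-\sum_\beta\frac{\Theta''}{\theta''_\beta}\theta'''_\beta\dot x_\beta^2\Big]-\eta\dot x_\alpha,$$ and the speed is $\|\dot x\|=(\sum_\alpha\theta''(x_\alpha)\dot x_\alpha^2)^{1/2}$. *)

theory Defs
  imports "HOL-Analysis.Analysis"
begin

text \<open>Strategies are indexed by a finite type 'n (playing the role of A = {0..n}).\<close>

definition strat_simplex :: "(real ^ 'n::finite) set" where
  "strat_simplex = {x. (\<forall>a. 0 \<le> x $ a) \<and> (\<Sum>a\<in>UNIV. x $ a) = 1}"

definition strat_simplex_int :: "(real ^ 'n::finite) set" where
  "strat_simplex_int = rel_interior strat_simplex"

definition payoff :: "real ^ 'n ^ 'n \<Rightarrow> real ^ 'n \<Rightarrow> real ^ 'n \<Rightarrow> real" where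
  "payoff U x y = x \<bullet> (U *v y)"

definition vfield :: "real ^ 'n ^ 'n \<Rightarrow> real ^ 'n \<Rightarrow> 'n \<Rightarrow> real" where
  "vfield U x a = (U *v x) $ a"

definition ESS :: "real ^ 'n::finite ^ 'n \<Rightarrow> real ^ 'n \<Rightarrow> bool" where
  "ESS U xs \<longleftrightarrow> xs \<in> strat_simplex \<and>
     (\<exists>W. openin (top_of_set strat_simplex) W \<and> xs \<in> W \<and>
        (\<forall>x\<in>W. payoff U x xs \<le> payoff U xs xs \<and>
           (payoff U xs xs = payoff U x xs \<and> x \<noteq> xs \<longrightarrow> payoff U x x < payoff U xs x)))"

text \<open>Kernel, restricted to (0,\<infinity>) (the value at 0 does not enter the dynamics).\<close>
definition kernel :: "(real \<Rightarrow> real) \<Rightarrow> bool" where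
  "kernel \<theta> \<longleftrightarrow>
     (\<forall>k. \<forall>x>0. ((deriv ^^ k) \<theta>) differentiable (at x)) \<and>
     filterlim (deriv \<theta>) at_bot (at_right 0) \<and>
     (\<forall>x>0. (deriv ^^ 2) \<theta> x > 0 \<and> (deriv ^^ 3) \<theta> x < 0)"

definition Theta2 :: "(real \<Rightarrow> real) \<Rightarrow> real ^ 'n::finite \<Rightarrow> real" where
  "Theta2 \<theta> x = 1 / (\<Sum>b\<in>UNIV. 1 / (deriv ^^ 2) \<theta> (x $ b))"

definition ID_rhs :: "(real \<Rightarrow> real) \<Rightarrow> real ^ 'n::finite ^ 'n \<Rightarrow> real \<Rightarrow> real ^ 'n \<Rightarrow> real ^ 'n \<Rightarrow> 'n \<Rightarrow> real" where
  "ID_rhs \<theta> U \<eta> x v a =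
     (let t2 = (\<lambda>b. (deriv ^^ 2) \<theta> (x $ b)); t3 = (\<lambda>b. (deriv ^^ 3) \<theta> (x $ b));
          T = Theta2 \<theta> x in
      (1 / t2 a) * (vfield U x a - (\<Sum>b\<in>UNIV. (T / t2 b) * vfield U x b))
      - (1 / (2 * t2 a)) * (t3 a * (v $ a)\<^sup>2 - (\<Sum>b\<in>UNIV. (T / t2 b) * t3 b * (v $ b)\<^sup>2))
      - \<eta> * v $ a)"

definition ID_solution :: "(real \<Rightarrow> real) \<Rightarrow> real ^ 'n::finite ^ 'n \<Rightarrow> real \<Rightarrow> (real \<Rightarrow> real ^ 'n) \<Rightarrow> (real \<Rightarrow> real ^ 'n) \<Rightarrow> bool" where
  "ID_solution \<theta> U \<eta> x v \<longleftrightarrow>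
     (\<forall>t\<ge>0. x t \<in> strat_simplex_int \<and>
        (x has_vector_derivative v t) (at t within {0..}) \<and>
        (\<exists>acc. (v has_vector_derivative acc) (at t within {0..}) \<and>
               (\<forall>a. acc $ a = ID_rhs \<theta> U \<eta> (x t) (v t) a)))"

definition speed :: "(real \<Rightarrow> real) \<Rightarrow> real ^ 'n::finite \<Rightarrow> real ^ 'n \<Rightarrow> real" where
  "speed \<theta> x v = sqrt (\<Sum>a\<in>UNIV. (deriv ^^ 2) \<theta> (x $ a) * (v $ a)\<^sup>2)"

end

theory Submission
  imports Defs
begin


lemma payoff_sum: "payoff U x y = (\<Sum>a\<in>UNIV. \<Sum>b\<in>UNIV. x$a * U$a$b * y$b)"
  by (simp add: payoff_def inner_vec_def matrix_vector_mult_def sum_distrib_left mult.assoc)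

lemma vfield_sum: "vfield U x a = (\<Sum>b\<in>UNIV. U$a$b * x$b)"
  by (simp add: vfield_def matrix_vector_mult_def)

lemma vec_comp_deriv:
  assumes "(x has_vector_derivative v) F"
  shows "((\<lambda>t. x t $ a) has_real_derivative v $ a) F"
proof -
  have "((\<lambda>t. x t $ a) has_derivative (\<lambda>h. (h *\<^sub>R v) $ a)) F"
    using bounded_linear.has_derivative[OF bounded_linear_vec_nth assms[unfolded has_vector_derivative_def]] .
  moreover have "(\<lambda>h. (h *\<^sub>R v) $ a) = (*) (v $ a)" by (auto simp: fun_eq_iff)
  ultimately show ?thesis by (simp add: has_field_derivative_def)
qed

lemma axis_in_simplex: "axis b 1 \<in> strat_simplex"
  by (simp add: strat_simplex_def axis_def)

lemma simplex_int_pos: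
  assumes "x \<in> strat_simplex_int"
  shows "x \<in> strat_simplex" "x $ a > 0"
proof -
  from assms obtain e where x: "x \<in> strat_simplex" and e: "e > 0"
    and sub: "ball x e \<inter> affine hull strat_simplex \<subseteq> strat_simplex"
    unfolding strat_simplex_int_def mem_rel_interior_ball by blast
  show "x \<in> strat_simplex" by fact
  have ge: "x $ a \<ge> 0" using x by (simp add: strat_simplex_def)
  show "x $ a > 0"
  proof (rule ccontr)
    assume "\<not> x $ a > 0"
    with ge have xa: "x $ a = 0" by simp
    have "\<exists>b. b \<noteq> a"
    proof (rule ccontr)
      assume "\<not> (\<exists>b. b \<noteq> a)"
      then have "UNIV = {a}" by auto
      then have "(\<Sum>b\<in>UNIV. x $ b) = x $ a" by (metis sum.empty sum.insert empty_iff finite.emptyI add.right_neutral)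
      with x xa show False by (simp add: strat_simplex_def)
    qed
    then obtain b where ba: "b \<noteq> a" by blast
    define c where "c = e / 4"
    define y where "y = 1 *\<^sub>R x + c *\<^sub>R axis b 1 + (- c) *\<^sub>R axis a 1"
    have "y \<in> affine hull strat_simplex"
      unfolding y_def
      by (rule mem_affine_3) (auto simp: hull_inc x axis_in_simplex)
    moreover have "y \<in> ball x e"
    proof -
      have "dist x y = norm (c *\<^sub>R axis b (1::real) - c *\<^sub>R axis a 1)"
        by (simp add: y_def dist_norm algebra_simps norm_minus_commute)
      also have "\<dots> \<le> norm (c *\<^sub>R axis b (1::real)) + norm (c *\<^sub>R axis a (1::real))"
        by (rule norm_triangle_ineq4)
      also have "\<dots> = 2 * c" using e by (simp add: c_def)
      also have "\<dots> < e" using e by (simp add: c_def)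
      finally show ?thesis by (simp add: mem_ball)
    qed
    ultimately have "y \<in> strat_simplex" using sub by blast
    moreover have "y $ a = - c" using ba xa by (simp add: y_def axis_def)
    moreover have "c > 0" using e by (simp add: c_def)
    ultimately have "0 \<le> - c" unfolding strat_simplex_def by (metis (mono_tags, lifting) mem_Collect_eq)
    with \<open>c > 0\<close> show False by simp
  qed
qed

lemma kernel_d2:
  assumes "kernel \<theta>" "x > 0"
  shows "((deriv^^2) \<theta> has_real_derivative (deriv^^3) \<theta> x) (at x)"
proof -
  have "(deriv^^2) \<theta> differentiable (at x)" using assms unfolding kernel_def by blast
  then have "((deriv^^2) \<theta> has_real_derivative deriv ((deriv^^2) \<theta>) x) (at x)"
    using DERIV_deriv_iff_real_differentiable by blast
  moreover have "(deriv^^3) \<theta> = deriv ((deriv^^2) \<theta>)"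
  proof -
    have "(3::nat) = Suc 2" by simp
    then show ?thesis by (simp only: funpow.simps(2) o_apply)
  qed
  ultimately show ?thesis by simp
qed

lemma kernel_d3_cont:
  assumes "kernel \<theta>" "x > 0"
  shows "isCont ((deriv^^3) \<theta>) x"
proof -
  have "(deriv^^3) \<theta> differentiable (at x)" using assms unfolding kernel_def by blast
  then show ?thesis by (rule differentiable_imp_continuous_within)
qed

lemma kernel_pos: "kernel \<theta> \<Longrightarrow> x > 0 \<Longrightarrow> (deriv^^2) \<theta> x > 0"
  unfolding kernel_def by blast
lemma kernel_neg3: "kernel \<theta> \<Longrightarrow> x > 0 \<Longrightarrow> (deriv^^3) \<theta> x < 0"
  unfolding kernel_def by blast

lemma kernel_mono:
  assumes "kernel \<theta>" "0 < x" "x \<le> y"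
  shows "(deriv^^2) \<theta> y \<le> (deriv^^2) \<theta> x"
  apply (rule DERIV_nonpos_imp_nonincreasing[OF assms(3)])
  using assms kernel_d2 kernel_neg3 by (meson less_le_trans less_imp_le)


definition Sf :: "(real \<Rightarrow> real) \<Rightarrow> real ^ 'n::finite \<Rightarrow> real ^ 'n \<Rightarrow> real" where
  "Sf \<theta> y w = (\<Sum>a\<in>UNIV. (deriv^^2) \<theta> (y $ a) * (w $ a)^2)"

lemma nontriv0: "t \<ge> (0::real) \<Longrightarrow> at t within {0..} \<noteq> bot"
proof -
  assume t: "t \<ge> 0"
  have "t islimpt {0..}"
    unfolding islimpt_approachable_real
  proof (intro allI impI)
    fix e :: real assume "e > 0"
    then show "\<exists>x'\<in>{0..}. x' \<noteq> t \<and> \<bar>x' - t\<bar> < e"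
      using t by (intro bexI[of _ "t + e/2"]) auto
  qed
  then show ?thesis using trivial_limit_within by blast
qed

lemma simplex_le1:
  assumes "y \<in> strat_simplex" shows "y $ a \<le> 1"
proof -
  have "y $ a \<le> (\<Sum>b\<in>UNIV. y $ b)"
    using assms by (intro member_le_sum) (auto simp: strat_simplex_def)
  then show ?thesis using assms by (simp add: strat_simplex_def)
qed

locale traj =
  fixes \<theta> :: "real \<Rightarrow> real" and U :: "real ^ 'n::finite ^ 'n" and \<eta> :: real
    and x v :: "real \<Rightarrow> real ^ 'n"
  assumes sol: "ID_solution \<theta> U \<eta> x v" and ker: "kernel \<theta>" and sym: "transpose U = U"
begin

lemma in_simplex: "t \<ge> 0 \<Longrightarrow> x t \<in> strat_simplex"
  using sol simplex_int_pos unfolding ID_solution_def by blast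

lemma pos: "t \<ge> 0 \<Longrightarrow> x t $ a > 0"
  using sol simplex_int_pos unfolding ID_solution_def by blast

lemma le1: "t \<ge> 0 \<Longrightarrow> x t $ a \<le> 1"
  using in_simplex simplex_le1 by blast

lemma dx: "t \<ge> 0 \<Longrightarrow> ((\<lambda>s. x s $ a) has_real_derivative v t $ a) (at t within {0..})"
  using sol vec_comp_deriv unfolding ID_solution_def by blast

lemma dv: "t \<ge> 0 \<Longrightarrow> ((\<lambda>s. v s $ a) has_real_derivative ID_rhs \<theta> U \<eta> (x t) (v t) a) (at t within {0..})"
proof -
  assume t: "t \<ge> 0"
  then obtain acc where "(v has_vector_derivative acc) (at t within {0..})"
    "\<forall>a. acc $ a = ID_rhs \<theta> U \<eta> (x t) (v t) a"
    using sol unfolding ID_solution_def by blast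
  then show ?thesis using vec_comp_deriv by metis
qed

lemma sumv: "t \<ge> 0 \<Longrightarrow> (\<Sum>a\<in>UNIV. v t $ a) = 0"
proof -
  assume t: "t \<ge> 0"
  have d1: "((\<lambda>s. \<Sum>a\<in>UNIV. x s $ a) has_real_derivative (\<Sum>a\<in>UNIV. v t $ a)) (at t within {0..})"
    by (rule DERIV_sum) (rule dx[OF t])
  have "((\<lambda>s. 1) has_real_derivative (\<Sum>a\<in>UNIV. v t $ a)) (at t within {0..})"
  proof (rule has_field_derivative_transform_within[OF d1, of 1])
    fix s :: real assume "s \<in> {0..}"
    then show "(\<Sum>a\<in>UNIV. x s $ a) = 1" using in_simplex[of s] by (simp add: strat_simplex_def)
  qed (use t in auto)
  moreover have "((\<lambda>s. 1) has_real_derivative 0) (at t within {0..})" by simp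
  ultimately show ?thesis
    using vector_derivative_unique_within[OF nontriv0[OF t]]
    by (metis has_real_derivative_iff_has_vector_derivative)
qed

lemma d2x: "t \<ge> 0 \<Longrightarrow> ((\<lambda>s. (deriv^^2) \<theta> (x s $ a)) has_real_derivative (deriv^^3) \<theta> (x t $ a) * v t $ a) (at t within {0..})"
  by (rule DERIV_chain2[OF kernel_d2[OF ker pos] dx])

lemma th2pos: "t \<ge> 0 \<Longrightarrow> (deriv^^2) \<theta> (x t $ a) > 0"
  using kernel_pos[OF ker pos] .

end


lemma term_alg:
  fixes t2 t3 w V C Dd \<eta> :: real
  assumes "t2 \<noteq> 0"
  shows "t3 * w * w\<^sup>2 + of_nat 2 * (((1/t2) * (V - C) - (1/(2*t2)) * (t3 * w\<^sup>2 - Dd) - \<eta> * w) * w ^ (2 - Suc 0)) * t2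
     = 2*(w*V) - 2*C*w + Dd*w - 2*\<eta>*(t2*w\<^sup>2)"
  using assms by (simp add: field_simps power2_eq_square)

lemma term_alg2:
  fixes t2 t3 w V C Dd \<eta> :: real
  assumes "t2 \<noteq> 0"
  shows "t3 * w * w + ((1/t2) * (V - C) - (1/(2*t2)) * (t3 * w\<^sup>2 - Dd) - \<eta> * w) * t2
     = V + (1/2) * t3 * w\<^sup>2 - \<eta> * (t2 * w) + (- C + (1/2) * Dd)"
  using assms by (simp add: field_simps power2_eq_square)

context traj begin

definition lam :: "real \<Rightarrow> real" where
  "lam t = - (\<Sum>b\<in>UNIV. (Theta2 \<theta> (x t) / (deriv^^2) \<theta> (x t $ b)) * vfield U (x t) b)
     + (1/2) * (\<Sum>b\<in>UNIV. (Theta2 \<theta> (x t) / (deriv^^2) \<theta> (x t $ b)) * (deriv^^3) \<theta> (x t $ b) * (v t $ b)\<^sup>2)"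

lemma dS: assumes t: "t \<ge> 0"
  shows "((\<lambda>s. Sf \<theta> (x s) (v s)) has_real_derivative
     2 * (\<Sum>a\<in>UNIV. v t $ a * vfield U (x t) a) - 2 * \<eta> * Sf \<theta> (x t) (v t)) (at t within {0..})"
proof -
  define T where "T = Theta2 \<theta> (x t)"
  define C where "C = (\<Sum>b\<in>UNIV. (T / (deriv^^2) \<theta> (x t $ b)) * vfield U (x t) b)"
  define Dd where "Dd = (\<Sum>b\<in>UNIV. (T / (deriv^^2) \<theta> (x t $ b)) * (deriv^^3) \<theta> (x t $ b) * (v t $ b)\<^sup>2)"
  have rhs: "ID_rhs \<theta> U \<eta> (x t) (v t) a =
      (1 / (deriv^^2) \<theta> (x t $ a)) * (vfield U (x t) a - C)
      - (1 / (2 * (deriv^^2) \<theta> (x t $ a))) * ((deriv^^3) \<theta> (x t $ a) * (v t $ a)\<^sup>2 - Dd)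
      - \<eta> * v t $ a" for a
    by (simp add: ID_rhs_def Let_def C_def Dd_def T_def)
  have "((\<lambda>s. Sf \<theta> (x s) (v s)) has_real_derivative
     (\<Sum>a\<in>UNIV. (deriv^^3) \<theta> (x t $ a) * v t $ a * (v t $ a)\<^sup>2 +
        of_nat 2 * (ID_rhs \<theta> U \<eta> (x t) (v t) a * v t $ a ^ (2 - Suc 0)) * (deriv^^2) \<theta> (x t $ a))) (at t within {0..})"
    unfolding Sf_def
    by (rule DERIV_sum, rule DERIV_mult[OF d2x[OF t] DERIV_power[OF dv[OF t]]])
  also have "(\<Sum>a\<in>UNIV. (deriv^^3) \<theta> (x t $ a) * v t $ a * (v t $ a)\<^sup>2 +
        of_nat 2 * (ID_rhs \<theta> U \<eta> (x t) (v t) a * v t $ a ^ (2 - Suc 0)) * (deriv^^2) \<theta> (x t $ a))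
     = (\<Sum>a\<in>UNIV. 2*(v t $ a * vfield U (x t) a) - 2*C * v t $ a + Dd * v t $ a - 2*\<eta>*((deriv^^2) \<theta> (x t $ a) * (v t $ a)\<^sup>2))"
    unfolding rhs using th2pos[OF t] by (intro sum.cong refl term_alg) (metis less_irrefl)
  also have "\<dots> = 2 * (\<Sum>a\<in>UNIV. v t $ a * vfield U (x t) a) - 2*C*(\<Sum>a\<in>UNIV. v t $ a)
        + Dd * (\<Sum>a\<in>UNIV. v t $ a) - 2 * \<eta> * Sf \<theta> (x t) (v t)"
    by (simp add: Sf_def sum.distrib sum_subtractf sum_distrib_left)
  also have "\<dots> = 2 * (\<Sum>a\<in>UNIV. v t $ a * vfield U (x t) a) - 2 * \<eta> * Sf \<theta> (x t) (v t)"
    using sumv[OF t] by simp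
  finally show ?thesis .
qed

lemma Usym: "U $ b $ a = U $ a $ b"
proof -
  have "(transpose U) $ a $ b = U $ b $ a" by (simp add: transpose_def)
  then show ?thesis using sym by simp
qed

lemma dF: assumes t: "t \<ge> 0"
  shows "((\<lambda>s. payoff U (x s) (x s)) has_real_derivative
     2 * (\<Sum>a\<in>UNIV. v t $ a * vfield U (x t) a)) (at t within {0..})"
proof -
  have "((\<lambda>s. \<Sum>a\<in>UNIV. \<Sum>b\<in>UNIV. x s $ a * U $ a $ b * x s $ b) has_real_derivative
     (\<Sum>a\<in>UNIV. \<Sum>b\<in>UNIV. (v t $ a * U $ a $ b * x t $ b + v t $ b * (x t $ a * U $ a $ b)))) (at t within {0..})"
    by (intro DERIV_sum DERIV_mult DERIV_cmult_right dx[OF t])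
  also have "(\<Sum>a\<in>UNIV. \<Sum>b\<in>UNIV. (v t $ a * U $ a $ b * x t $ b + v t $ b * (x t $ a * U $ a $ b)))
     = (\<Sum>a\<in>UNIV. \<Sum>b\<in>UNIV. v t $ a * U $ a $ b * x t $ b) + (\<Sum>a\<in>UNIV. \<Sum>b\<in>UNIV. v t $ b * (x t $ a * U $ a $ b))"
    by (simp add: sum.distrib)
  also have "(\<Sum>a\<in>UNIV. \<Sum>b\<in>UNIV. v t $ b * (x t $ a * U $ a $ b)) = (\<Sum>b\<in>UNIV. \<Sum>a\<in>UNIV. v t $ b * (x t $ a * U $ a $ b))"
    by (rule sum.swap)
  also have "\<dots> = (\<Sum>b\<in>UNIV. \<Sum>a\<in>UNIV. v t $ b * U $ b $ a * x t $ a)"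
    by (intro sum.cong refl) (metis Usym mult.commute mult.assoc)
  finally show ?thesis
    by (simp add: payoff_sum vfield_sum sum_distrib_left mult_ac)
qed

lemma dY: assumes t: "t \<ge> 0"
  shows "((\<lambda>s. (deriv^^2) \<theta> (x s $ a) * v s $ a) has_real_derivative
     vfield U (x t) a + (1/2) * (deriv^^3) \<theta> (x t $ a) * (v t $ a)\<^sup>2
       - \<eta> * ((deriv^^2) \<theta> (x t $ a) * v t $ a) + lam t) (at t within {0..})"
proof -
  have "((\<lambda>s. (deriv^^2) \<theta> (x s $ a) * v s $ a) has_real_derivative
     (deriv^^3) \<theta> (x t $ a) * v t $ a * v t $ a + ID_rhs \<theta> U \<eta> (x t) (v t) a * (deriv^^2) \<theta> (x t $ a)) (at t within {0..})"
    by (rule DERIV_mult[OF d2x[OF t] dv[OF t]])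
  also have "(deriv^^3) \<theta> (x t $ a) * v t $ a * v t $ a + ID_rhs \<theta> U \<eta> (x t) (v t) a * (deriv^^2) \<theta> (x t $ a)
     = vfield U (x t) a + (1/2) * (deriv^^3) \<theta> (x t $ a) * (v t $ a)\<^sup>2
       - \<eta> * ((deriv^^2) \<theta> (x t $ a) * v t $ a) + lam t"
    unfolding ID_rhs_def Let_def lam_def
    by (rule term_alg2) (metis th2pos[OF t] less_irrefl)
  finally show ?thesis .
qed

end


lemma payoff_add_left: "payoff U (a + b) c = payoff U a c + payoff U b c"
  by (simp add: payoff_def inner_add_left)
lemma payoff_diff_left: "payoff U (a - b) c = payoff U a c - payoff U b c"
  by (simp add: payoff_def inner_diff_left)
lemma payoff_scale_left: "payoff U (r *\<^sub>R a) c = r * payoff U a c"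
  by (simp add: payoff_def)
lemma payoff_add_right: "payoff U a (b + c) = payoff U a b + payoff U a c"
  by (simp add: payoff_def matrix_vector_right_distrib inner_add_right)
lemma payoff_diff_right: "payoff U a (b - c) = payoff U a b - payoff U a c"
  by (simp add: payoff_def matrix_vector_mult_diff_distrib inner_diff_right)
lemma payoff_scale_right: "payoff U a (r *\<^sub>R b) = r * payoff U a b"
  by (simp add: payoff_def matrix_vector_mult_scaleR)

lemma cont_payoff:
  assumes "continuous_on S f" "continuous_on S g"
  shows "continuous_on S (\<lambda>y. payoff U (f y) (g y))"
  unfolding payoff_sum by (intro continuous_intros assms)

lemma simplex_compact: "compact (strat_simplex :: (real^'n::finite) set)"
proof -
  have eq: "(strat_simplex :: (real^'n) set) = {x. \<forall>a. 0 \<le> x$a} \<inter> {x. (\<Sum>a\<in>UNIV. x$a) = 1}"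
    by (auto simp: strat_simplex_def)
  have c1: "closed {x::real^'n. \<forall>a. 0 \<le> x$a}"
    by (intro closed_Collect_all closed_Collect_le continuous_intros)
  have c2: "closed {x::real^'n. (\<Sum>a\<in>UNIV. x$a) = 1}"
    by (intro closed_Collect_eq continuous_intros)
  have b: "bounded (strat_simplex :: (real^'n) set)"
  proof -
    have "strat_simplex \<subseteq> cball (0::real^'n) 1"
    proof
      fix x :: "real^'n" assume x: "x \<in> strat_simplex"
      have "norm x \<le> (\<Sum>a\<in>UNIV. \<bar>x$a\<bar>)" by (rule norm_le_l1_cart)
      also have "\<dots> = (\<Sum>a\<in>UNIV. x$a)" using x by (simp add: strat_simplex_def)
      also have "\<dots> = 1" using x by (simp add: strat_simplex_def)
      finally show "x \<in> cball 0 1" by simp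
    qed
    then show ?thesis using bounded_cball bounded_subset by blast
  qed
  have "closed (strat_simplex :: (real^'n) set)" by (subst eq) (rule closed_Int[OF c1 c2])
  then show ?thesis unfolding compact_eq_bounded_closed using b by auto
qed

lemma simplex_comb:
  assumes "x \<in> strat_simplex" "y \<in> strat_simplex" "0 \<le> s" "s \<le> 1"
  shows "(1 - s) *\<^sub>R x + s *\<^sub>R y \<in> strat_simplex"
proof -
  have "\<forall>a. 0 \<le> ((1 - s) *\<^sub>R x + s *\<^sub>R y) $ a"
    using assms by (auto simp: strat_simplex_def)
  moreover have "(\<Sum>a\<in>UNIV. ((1 - s) *\<^sub>R x + s *\<^sub>R y) $ a) = (1 - s) * (\<Sum>a\<in>UNIV. x $ a) + s * (\<Sum>a\<in>UNIV. y$a)"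
    by (simp add: sum.distrib sum_distrib_left)
  ultimately show ?thesis using assms by (simp add: strat_simplex_def)
qed

lemma simplex_exists_pos:
  assumes "xs \<in> strat_simplex" shows "\<exists>a. xs $ a > 0"
proof (rule ccontr)
  assume "\<not> (\<exists>a. xs $ a > 0)"
  have "\<forall>a. xs $ a = 0"
  proof
    fix a
    have "0 \<le> xs $ a" using assms by (simp add: strat_simplex_def)
    moreover have "\<not> xs $ a > 0" using \<open>\<not> (\<exists>a. xs $ a > 0)\<close> by blast
    ultimately show "xs $ a = 0" by linarith
  qed
  then show False using assms by (simp add: strat_simplex_def)
qed

lemma ESS_superior:
  assumes ess: "ESS U xs"
  shows "\<exists>\<rho>>0. \<forall>y\<in>strat_simplex. 0 < dist y xs \<and> dist y xs < \<rho> \<longrightarrow> payoff U y y < payoff U xs y"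
proof -
  from ess obtain W where xsD: "xs \<in> strat_simplex" and W: "openin (top_of_set strat_simplex) W" "xs \<in> W"
    and Wp: "\<forall>y\<in>W. payoff U y xs \<le> payoff U xs xs \<and>
           (payoff U xs xs = payoff U y xs \<and> y \<noteq> xs \<longrightarrow> payoff U y y < payoff U xs y)"
    unfolding ESS_def by blast
  from W obtain r0 where r0: "r0 > 0" "ball xs r0 \<inter> strat_simplex \<subseteq> W"
    unfolding openin_contains_ball by blast
  define P where "P = {a. xs $ a > 0}"
  have Pne: "P \<noteq> {}" using simplex_exists_pos[OF xsD] by (auto simp: P_def)
  define \<mu> where "\<mu> = Min ((\<lambda>a. xs $ a) ` P)"
  have \<mu>pos: "\<mu> > 0" unfolding \<mu>_def using Pne by (auto simp: P_def)
  have \<mu>le: "\<mu> \<le> xs $ a" if "xs $ a > 0" for a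
    unfolding \<mu>_def using that by (intro Min_le) (auto simp: P_def)
  define \<rho>0 where "\<rho>0 = min r0 \<mu> / 2"
  have \<rho>0: "\<rho>0 > 0" "\<rho>0 < r0" "\<rho>0 < \<mu>" using r0 \<mu>pos by (auto simp: \<rho>0_def)
  define Y where "Y = strat_simplex \<inter> {y. dist y xs = \<rho>0}"
  define \<alpha> where "\<alpha> y = payoff U xs xs - payoff U y xs" for y
  define \<beta> where "\<beta> y = payoff U (y - xs) (y - xs)" for y
  have cb: "continuous_on UNIV \<beta>" unfolding \<beta>_def by (intro cont_payoff continuous_intros)
  have ca: "continuous_on UNIV \<alpha>" unfolding \<alpha>_def by (intro cont_payoff continuous_intros)
  have Ycomp: "compact Y" unfolding Y_def
    by (intro compact_Int_closed simplex_compact closed_Collect_eq continuous_intros)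
  have YW: "y \<in> W" "y \<noteq> xs" if "y \<in> Y" for y
    using that r0 \<rho>0 by (auto simp: Y_def dist_commute)
  have \<alpha>nn: "\<alpha> y \<ge> 0" if "y \<in> Y" for y
    using Wp YW[OF that] by (auto simp: \<alpha>_def)
  have \<alpha>\<beta>: "\<beta> y < 0" if "y \<in> Y" "\<alpha> y = 0" for y
  proof -
    have "payoff U y y < payoff U xs y" using Wp YW[OF that(1)] that(2) by (auto simp: \<alpha>_def)
    moreover have "\<beta> y = payoff U y y - payoff U xs y - (payoff U y xs - payoff U xs xs)"
      by (simp add: \<beta>_def payoff_diff_left payoff_diff_right)
    ultimately show ?thesis using that(2) by (simp add: \<alpha>_def)
  qed
  define Y0 where "Y0 = Y \<inter> {y. 0 \<le> \<beta> y}"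
  have Y0comp: "compact Y0" unfolding Y0_def
    using Ycomp cb by (intro compact_Int_closed closed_Collect_le continuous_intros) auto
  obtain s0 where s0: "0 < s0" "s0 \<le> 1" "\<forall>y\<in>Y0. \<forall>s. 0 < s \<longrightarrow> s < s0 \<longrightarrow> s * \<beta> y < \<alpha> y"
  proof (cases "Y0 = {}")
    case True then show ?thesis by (intro that[of 1]) auto
  next
    case False
    obtain yk where yk: "yk \<in> Y0" "\<forall>y\<in>Y0. \<alpha> yk \<le> \<alpha> y"
      using continuous_attains_inf[OF Y0comp False continuous_on_subset[OF ca]] by blast
    obtain yb where yb: "yb \<in> Y0" "\<forall>y\<in>Y0. \<beta> y \<le> \<beta> yb"
      using continuous_attains_sup[OF Y0comp False continuous_on_subset[OF cb]] by blast
    define \<kappa> where "\<kappa> = \<alpha> yk"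
    define B where "B = \<beta> yb"
    have B0: "B \<ge> 0" using yb by (simp add: B_def Y0_def)
    have \<kappa>0: "\<kappa> > 0"
    proof -
      have "yk \<in> Y" "\<beta> yk \<ge> 0" using yk by (auto simp: Y0_def)
      then show ?thesis using \<alpha>nn \<alpha>\<beta> unfolding \<kappa>_def by (metis less_eq_real_def not_le)
    qed
    show ?thesis
    proof (rule that[of "min 1 (\<kappa> / (B + 1))"])
      show "0 < min 1 (\<kappa> / (B + 1))" using \<kappa>0 B0 by simp
      show "min 1 (\<kappa> / (B + 1)) \<le> 1" by simp
      show "\<forall>y\<in>Y0. \<forall>s. 0 < s \<longrightarrow> s < min 1 (\<kappa> / (B + 1)) \<longrightarrow> s * \<beta> y < \<alpha> y"
      proof (intro ballI allI impI)
        fix y s assume y: "y \<in> Y0" and s: "0 < s" "s < min 1 (\<kappa> / (B + 1))"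
        have "s * \<beta> y \<le> s * B" using yb y s by (intro mult_left_mono) (auto simp: B_def)
        also have "\<dots> \<le> (\<kappa> / (B + 1)) * B" using s B0 by (intro mult_right_mono) auto
        also have "\<dots> < \<kappa>" using \<kappa>0 B0 by (simp add: field_simps)
        also have "\<dots> \<le> \<alpha> y" using yk y by (simp add: \<kappa>_def)
        finally show "s * \<beta> y < \<alpha> y" .
      qed
    qed
  qed
  show ?thesis
  proof (intro exI[of _ "s0 * \<rho>0"] conjI ballI impI)
    show "s0 * \<rho>0 > 0" using s0 \<rho>0 by simp
    fix x assume xD: "x \<in> strat_simplex" and d: "0 < dist x xs \<and> dist x xs < s0 * \<rho>0"
    define s where "s = dist x xs / \<rho>0"
    have s: "0 < s" "s < s0" using d \<rho>0 by (auto simp: s_def field_simps)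
    define y where "y = xs + (1/s) *\<^sub>R (x - xs)"
    have xeq: "x - xs = s *\<^sub>R (y - xs)" using s by (simp add: y_def)
    have dy: "dist y xs = \<rho>0"
    proof -
      have "dist y xs = norm ((1/s) *\<^sub>R (x - xs))" by (simp add: y_def dist_norm)
      also have "\<dots> = (1/s) * dist x xs" using s by (simp add: dist_norm)
      finally show ?thesis using s \<rho>0 d by (simp add: s_def)
    qed
    have yD: "y \<in> strat_simplex"
    proof -
      have "0 \<le> y $ a" for a
      proof (cases "xs $ a > 0")
        case True
        have "\<bar>(y - xs) $ a\<bar> \<le> norm (y - xs)" by (rule component_le_norm_cart)
        also have "\<dots> = \<rho>0" using dy by (simp add: dist_norm)
        finally have "\<bar>y $ a - xs $ a\<bar> < \<mu>" using \<rho>0 by simp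
        then show ?thesis using \<mu>le[OF True] by linarith
      next
        case False
        then have "xs $ a = 0" using xsD by (auto simp: strat_simplex_def intro: order.antisym)
        then show ?thesis using xD s by (simp add: y_def strat_simplex_def)
      qed
      moreover have "(\<Sum>a\<in>UNIV. y $ a) = (\<Sum>a\<in>UNIV. xs $ a) + (1/s) * ((\<Sum>a\<in>UNIV. x $ a) - (\<Sum>a\<in>UNIV. xs $ a))"
        by (simp add: y_def sum.distrib sum_distrib_left sum_subtractf sum_divide_distrib[symmetric])
      ultimately show ?thesis using xD xsD by (simp add: strat_simplex_def)
    qed
    have yY: "y \<in> Y" using yD dy by (simp add: Y_def)
    have key: "payoff U xs x - payoff U x x = s * (\<alpha> y - s * \<beta> y)"
    proof -
      have xe: "x = xs + s *\<^sub>R (y - xs)" using xeq by (simp add: algebra_simps)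
      have "payoff U xs x - payoff U x x = - payoff U (x - xs) x" by (simp add: payoff_diff_left)
      also have "\<dots> = - (s * payoff U (y - xs) x)" by (simp add: xeq payoff_scale_left)
      also have "payoff U (y - xs) x = payoff U (y - xs) xs + s * \<beta> y"
        by (subst xe) (simp add: payoff_add_right payoff_scale_right \<beta>_def)
      also have "payoff U (y - xs) xs = - \<alpha> y" by (simp add: \<alpha>_def payoff_diff_left)
      finally show ?thesis by (simp add: algebra_simps)
    qed
    have "\<alpha> y - s * \<beta> y > 0"
    proof (cases "\<beta> y < 0")
      case True
      have "s * \<beta> y < 0" using True s by (simp add: mult_pos_neg)
      then show ?thesis using \<alpha>nn[OF yY] by linarith
    next
      case False
      then have "y \<in> Y0" using yY by (simp add: Y0_def)
      then show ?thesis using s0 s by auto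
    qed
    then have "s * (\<alpha> y - s * \<beta> y) > 0" using s by simp
    with key show "payoff U x x < payoff U xs x" by linarith
  qed
qed


lemma mvt0:
  fixes f f' :: "real \<Rightarrow> real"
  assumes "0 \<le> a" "a < b" "\<And>t. a \<le> t \<Longrightarrow> t \<le> b \<Longrightarrow> (f has_real_derivative f' t) (at t within {0..})"
  shows "\<exists>\<xi>. a < \<xi> \<and> \<xi> < b \<and> f b - f a = f' \<xi> * (b - a)"
proof -
  have "\<exists>\<xi>\<in>{a<..<b}. f b - f a = (*) (f' \<xi>) (b - a)"
  proof (rule mvt_simple[OF assms(2)])
    fix t assume t: "a \<le> t" "t \<le> b"
    have "(f has_derivative (*) (f' t)) (at t within {0..})"
      using assms(3)[OF t] by (simp add: has_field_derivative_def)
    then show "(f has_derivative (*) (f' t)) (at t within {a..b})"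
      by (rule has_derivative_subset) (use assms(1) in auto)
  qed
  then show ?thesis by auto
qed

lemma deriv_ge:
  fixes f f' :: "real \<Rightarrow> real"
  assumes "0 \<le> a" "a \<le> b" "\<And>t. a \<le> t \<Longrightarrow> t \<le> b \<Longrightarrow> (f has_real_derivative f' t) (at t within {0..})"
    and "\<And>t. a \<le> t \<Longrightarrow> t \<le> b \<Longrightarrow> c \<le> f' t"
  shows "c * (b - a) \<le> f b - f a"
proof (cases "a = b")
  case False
  then have "a < b" using assms by simp
  from mvt0[OF assms(1) this assms(3)] obtain \<xi> where "a < \<xi>" "\<xi> < b" "f b - f a = f' \<xi> * (b - a)" by blast
  moreover have "c \<le> f' \<xi>" using assms(4) \<open>a < \<xi>\<close> \<open>\<xi> < b\<close> by simp
  ultimately show ?thesis using \<open>a < b\<close> by (simp add: mult_right_mono)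
qed simp

lemma deriv_le:
  fixes f f' :: "real \<Rightarrow> real"
  assumes "0 \<le> a" "a \<le> b" "\<And>t. a \<le> t \<Longrightarrow> t \<le> b \<Longrightarrow> (f has_real_derivative f' t) (at t within {0..})"
    and "\<And>t. a \<le> t \<Longrightarrow> t \<le> b \<Longrightarrow> f' t \<le> c"
  shows "f b - f a \<le> c * (b - a)"
proof (cases "a = b")
  case False
  then have "a < b" using assms by simp
  from mvt0[OF assms(1) this assms(3)] obtain \<xi> where "a < \<xi>" "\<xi> < b" "f b - f a = f' \<xi> * (b - a)" by blast
  moreover have "f' \<xi> \<le> c" using assms(4) \<open>a < \<xi>\<close> \<open>\<xi> < b\<close> by simp
  ultimately show ?thesis using \<open>a < b\<close> by (simp add: mult_right_mono)
qed simp

lemma abs_le_1_sq: "\<bar>z::real\<bar> \<le> 1 + z\<^sup>2"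
proof (cases "\<bar>z\<bar> \<le> 1")
  case False
  then have "\<bar>z\<bar> * 1 \<le> \<bar>z\<bar> * \<bar>z\<bar>" by (intro mult_left_mono) auto
  then show ?thesis by (simp add: power2_eq_square)
qed (simp add: add_increasing2)

definition Cu :: "real ^ 'n::finite ^ 'n \<Rightarrow> real" where
  "Cu U = (\<Sum>a\<in>UNIV. \<Sum>b\<in>UNIV. \<bar>U $ a $ b\<bar>)"

lemma payoff_vfield: "payoff U y z = (\<Sum>a\<in>UNIV. y $ a * vfield U z a)"
  by (simp add: payoff_def inner_vec_def vfield_def)

lemma vfield_bound:
  assumes "y \<in> strat_simplex" shows "\<bar>vfield U y a\<bar> \<le> Cu U"
proof -
  have "\<bar>vfield U y a\<bar> \<le> (\<Sum>b\<in>UNIV. \<bar>U $ a $ b * y $ b\<bar>)"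
    unfolding vfield_sum by (rule sum_abs)
  also have "\<dots> \<le> (\<Sum>b\<in>UNIV. \<bar>U $ a $ b\<bar>)"
  proof (intro sum_mono)
    fix b
    have "\<bar>y $ b\<bar> \<le> 1" using assms simplex_le1[OF assms] by (simp add: strat_simplex_def)
    then show "\<bar>U $ a $ b * y $ b\<bar> \<le> \<bar>U $ a $ b\<bar>"
      by (simp add: abs_mult mult_left_le)
  qed
  also have "\<dots> \<le> Cu U" unfolding Cu_def
    by (rule member_le_sum[where f="\<lambda>a. \<Sum>b\<in>UNIV. \<bar>U $ a $ b\<bar>"]) (auto intro: sum_nonneg)
  finally show ?thesis .
qed

lemma payoff_bound:
  assumes "y \<in> strat_simplex" "z \<in> strat_simplex" shows "\<bar>payoff U y z\<bar> \<le> Cu U"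
proof -
  have "\<bar>payoff U y z\<bar> \<le> (\<Sum>a\<in>UNIV. \<bar>y $ a * vfield U z a\<bar>)"
    unfolding payoff_vfield by (rule sum_abs)
  also have "\<dots> \<le> (\<Sum>a\<in>UNIV. y $ a * Cu U)"
  proof (intro sum_mono)
    fix a
    have "y $ a \<ge> 0" using assms by (simp add: strat_simplex_def)
    then show "\<bar>y $ a * vfield U z a\<bar> \<le> y $ a * Cu U"
      using vfield_bound[OF assms(2)] by (simp add: abs_mult mult_left_mono)
  qed
  also have "\<dots> = Cu U" using assms by (simp add: strat_simplex_def sum_distrib_right[symmetric])
  finally show ?thesis .
qed

context traj begin

definition En :: "real \<Rightarrow> real" where
  "En t = Sf \<theta> (x t) (v t) - payoff U (x t) (x t)"

lemma dE: "t \<ge> 0 \<Longrightarrow> (En has_real_derivative - 2 * \<eta> * Sf \<theta> (x t) (v t)) (at t within {0..})"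
  unfolding En_def using DERIV_diff[OF dS dF] by simp

lemma Sf_nonneg: "t \<ge> 0 \<Longrightarrow> Sf \<theta> (x t) (v t) \<ge> 0"
  unfolding Sf_def using th2pos by (intro sum_nonneg) (simp add: less_imp_le)

lemma Sf_ge: assumes t: "t \<ge> 0" shows "(deriv^^2) \<theta> 1 * (v t $ a)\<^sup>2 \<le> Sf \<theta> (x t) (v t)"
proof -
  have "(deriv^^2) \<theta> 1 * (v t $ a)\<^sup>2 \<le> (deriv^^2) \<theta> (x t $ a) * (v t $ a)\<^sup>2"
    using kernel_mono[OF ker pos[OF t] le1[OF t]] by (intro mult_right_mono) auto
  also have "\<dots> \<le> Sf \<theta> (x t) (v t)" unfolding Sf_def
    by (rule member_le_sum[where f="\<lambda>a. (deriv^^2) \<theta> (x t $ a) * (v t $ a)\<^sup>2"])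
       (auto intro!: mult_nonneg_nonneg simp: less_imp_le[OF th2pos[OF t]])
  finally show ?thesis .
qed

lemma En_mono:
  assumes eta: "\<eta> > 0" and "0 \<le> s" "s \<le> t" shows "En t \<le> En s"
proof -
  have "En t - En s \<le> 0 * (t - s)"
  proof (rule deriv_le[where f' = "\<lambda>r. - 2 * \<eta> * Sf \<theta> (x r) (v r)", OF assms(2,3)])
    fix r assume "s \<le> r" "r \<le> t"
    then have r0: "r \<ge> 0" using assms(2) by simp
    show "(En has_real_derivative - 2 * \<eta> * Sf \<theta> (x r) (v r)) (at r within {0..})" by (rule dE[OF r0])
    show "- 2 * \<eta> * Sf \<theta> (x r) (v r) \<le> 0" using eta Sf_nonneg[OF r0] by simp
  qed
  then show ?thesis by simp
qed

lemma En_lower: assumes "t \<ge> 0" shows "En t \<ge> - Cu U"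
proof -
  have "\<bar>payoff U (x t) (x t)\<bar> \<le> Cu U" using payoff_bound[OF in_simplex[OF assms] in_simplex[OF assms]] .
  then have "payoff U (x t) (x t) \<le> Cu U" by (simp add: abs_le_iff)
  then show ?thesis unfolding En_def using Sf_nonneg[OF assms] by linarith
qed

lemma S_to_0:
  assumes eta: "\<eta> > 0" and \<sigma>: "\<sigma> > 0"
  shows "\<exists>T\<ge>0. \<forall>t\<ge>T. Sf \<theta> (x t) (v t) < \<sigma>"
proof -
  define Smax where "Smax = En 0 + Cu U"
  define m where "m = (deriv^^2) \<theta> 1"
  have m: "m > 0" unfolding m_def by (rule kernel_pos[OF ker]) simp
  have Sle: "Sf \<theta> (x t) (v t) \<le> Smax" if "t \<ge> 0" for t
    using En_mono[OF eta order.refl that] payoff_bound[OF in_simplex[OF that] in_simplex[OF that], of U]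
    unfolding Smax_def En_def by linarith
  have Smax0: "Smax \<ge> 0" using Sle[of 0] Sf_nonneg[of 0] by simp
  have vb: "\<bar>v t $ a\<bar> \<le> 1 + Smax / m" if "t \<ge> 0" for t a
  proof -
    have "m * (v t $ a)\<^sup>2 \<le> Smax" using Sf_ge[OF that, of a] Sle[OF that] unfolding m_def by linarith
    then have "(v t $ a)\<^sup>2 \<le> Smax / m" using m by (simp add: field_simps)
    then show ?thesis using abs_le_1_sq[of "v t $ a"] by linarith
  qed
  define L where "L = 2 * (real CARD('n) * ((1 + Smax / m) * Cu U)) + 2 * \<eta> * Smax + 1"
  have Cu0: "Cu U \<ge> 0" unfolding Cu_def by (intro sum_nonneg) auto
  have L0: "L > 0" unfolding L_def using Smax0 m eta Cu0
    by (simp add: add_nonneg_pos)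
  have dSb: "\<bar>2 * (\<Sum>a\<in>UNIV. v t $ a * vfield U (x t) a) - 2 * \<eta> * Sf \<theta> (x t) (v t)\<bar> \<le> L"
    if t: "t \<ge> 0" for t
  proof -
    have "\<bar>\<Sum>a\<in>UNIV. v t $ a * vfield U (x t) a\<bar> \<le> (\<Sum>a\<in>UNIV. \<bar>v t $ a * vfield U (x t) a\<bar>)"
      by (rule sum_abs)
    also have "\<dots> \<le> (\<Sum>a\<in>(UNIV::'n set). (1 + Smax / m) * Cu U)"
    proof (intro sum_mono)
      fix a
      have "\<bar>v t $ a\<bar> * \<bar>vfield U (x t) a\<bar> \<le> (1 + Smax / m) * Cu U"
        by (rule mult_mono[OF vb[OF t] vfield_bound[OF in_simplex[OF t]]]) (use Cu0 Smax0 m in auto)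
      then show "\<bar>v t $ a * vfield U (x t) a\<bar> \<le> (1 + Smax / m) * Cu U" by (simp add: abs_mult)
    qed
    also have "\<dots> = real CARD('n) * ((1 + Smax / m) * Cu U)" by simp
    finally have "\<bar>\<Sum>a\<in>UNIV. v t $ a * vfield U (x t) a\<bar> \<le> real CARD('n) * ((1 + Smax / m) * Cu U)" .
    moreover have "\<bar>2 * \<eta> * Sf \<theta> (x t) (v t)\<bar> \<le> 2 * \<eta> * Smax"
      using Sf_nonneg[OF t] Sle[OF t] eta by (simp add: abs_mult)
    ultimately show ?thesis unfolding L_def by linarith
  qed
  define Einf where "Einf = Inf (En ` {0..})"
  have bdd: "bdd_below (En ` {0..})"
  proof (rule bdd_belowI)
    fix y assume "y \<in> En ` {0..}"
    then obtain s where "s \<ge> 0" "y = En s" by auto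
    then show "- Cu U \<le> y" using En_lower by simp
  qed
  have Einf_le: "Einf \<le> En t" if "t \<ge> 0" for t
    unfolding Einf_def using bdd that by (intro cInf_lower) simp_all
  define h where "h = \<sigma> / (2 * L)"
  have h0: "h > 0" using \<sigma> L0 by (simp add: h_def)
  define \<epsilon> where "\<epsilon> = \<eta> * \<sigma> * h"
  have \<epsilon>0: "\<epsilon> > 0" using eta \<sigma> h0 by (simp add: \<epsilon>_def)
  obtain T where T: "T \<ge> 0" "En T < Einf + \<epsilon>"
  proof -
    have "Inf (En ` {0..}) < Einf + \<epsilon>" using \<epsilon>0 by (simp add: Einf_def)
    then obtain y where "y \<in> En ` {0..}" "y < Einf + \<epsilon>"
      using cInf_lessD[of "En ` {0..}"] by blast
    then show ?thesis using that by auto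
  qed
  show ?thesis
  proof (intro exI[of _ T] conjI allI impI)
    show "T \<ge> 0" by fact
    fix t assume tT: "t \<ge> T"
    have t0: "t \<ge> 0" using T tT by simp
    show "Sf \<theta> (x t) (v t) < \<sigma>"
    proof (rule ccontr)
      assume "\<not> Sf \<theta> (x t) (v t) < \<sigma>"
      then have St: "Sf \<theta> (x t) (v t) \<ge> \<sigma>" by simp
      have Sxi: "Sf \<theta> (x \<xi>) (v \<xi>) \<ge> \<sigma> / 2" if "t \<le> \<xi>" "\<xi> \<le> t + h" for \<xi>
      proof -
        have "(- L) * (\<xi> - t) \<le> Sf \<theta> (x \<xi>) (v \<xi>) - Sf \<theta> (x t) (v t)"
        proof (rule deriv_ge[where f = "\<lambda>s. Sf \<theta> (x s) (v s)"
            and f' = "\<lambda>s. 2 * (\<Sum>a\<in>UNIV. v s $ a * vfield U (x s) a) - 2 * \<eta> * Sf \<theta> (x s) (v s)", OF t0 that(1)])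
          fix s assume s: "t \<le> s" "s \<le> \<xi>"
          then have s0: "s \<ge> 0" using t0 by simp
          show "((\<lambda>s. Sf \<theta> (x s) (v s)) has_real_derivative
             2 * (\<Sum>a\<in>UNIV. v s $ a * vfield U (x s) a) - 2 * \<eta> * Sf \<theta> (x s) (v s)) (at s within {0..})"
            by (rule dS[OF s0])
          show "- L \<le> 2 * (\<Sum>a\<in>UNIV. v s $ a * vfield U (x s) a) - 2 * \<eta> * Sf \<theta> (x s) (v s)"
            using dSb[OF s0] by (simp add: abs_le_iff)
        qed
        moreover have "L * (\<xi> - t) \<le> L * h" using L0 that by (intro mult_left_mono) auto
        moreover have "L * h = \<sigma> / 2" using L0 by (simp add: h_def)
        ultimately show ?thesis using St by linarith
      qed
      have "En (t + h) - En t \<le> (- (\<eta> * \<sigma>)) * (t + h - t)"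
      proof (rule deriv_le[OF t0 _ dE])
        show "t \<le> t + h" using h0 by simp
        fix \<xi> assume "t \<le> \<xi>" "\<xi> \<le> t + h"
        then have "\<sigma> / 2 \<le> Sf \<theta> (x \<xi>) (v \<xi>)" using Sxi by blast
        then have "\<eta> * (\<sigma> / 2) \<le> \<eta> * Sf \<theta> (x \<xi>) (v \<xi>)" using eta by (intro mult_left_mono) auto
        then show "- 2 * \<eta> * Sf \<theta> (x \<xi>) (v \<xi>) \<le> - (\<eta> * \<sigma>)" by simp
      qed (use t0 in auto)
      moreover have "Einf \<le> En (t + h)" using Einf_le t0 h0 by simp
      moreover have "En t \<le> En T" using En_mono[OF eta T(1) tT] .
      ultimately have "En (t + h) - En t \<le> - (\<eta> * \<sigma> * h)" "Einf \<le> En (t + h)" "En t \<le> En T"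
        by (simp_all add: algebra_simps)
      moreover have "En T < Einf + \<eta> * \<sigma> * h" using T(2) by (simp add: \<epsilon>_def)
      ultimately show False by linarith
    qed
  qed
qed

end


context traj begin

lemma comp_move:
  assumes "0 \<le> t0" "t0 \<le> t" "\<And>s. t0 \<le> s \<Longrightarrow> s \<le> t \<Longrightarrow> \<bar>v s $ c\<bar> \<le> \<nu>"
  shows "\<bar>x t $ c - x t0 $ c\<bar> \<le> \<nu> * (t - t0)"
proof -
  have "x t $ c - x t0 $ c \<le> \<nu> * (t - t0)"
  proof (rule deriv_le[where f = "\<lambda>s. x s $ c" and f' = "\<lambda>s. v s $ c", OF assms(1,2)])
    fix s assume s: "t0 \<le> s" "s \<le> t"
    then show "((\<lambda>s. x s $ c) has_real_derivative v s $ c) (at s within {0..})" using dx assms(1) by simp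
    show "v s $ c \<le> \<nu>" using assms(3)[OF s] by (simp add: abs_le_iff)
  qed
  moreover have "(- \<nu>) * (t - t0) \<le> x t $ c - x t0 $ c"
  proof (rule deriv_ge[where f = "\<lambda>s. x s $ c" and f' = "\<lambda>s. v s $ c", OF assms(1,2)])
    fix s assume s: "t0 \<le> s" "s \<le> t"
    then show "((\<lambda>s. x s $ c) has_real_derivative v s $ c) (at s within {0..})" using dx assms(1) by simp
    show "- \<nu> \<le> v s $ c" using assms(3)[OF s] by (simp add: abs_le_iff)
  qed
  ultimately show ?thesis by (simp add: abs_le_iff)
qed

lemma no_nonrest_limit:
  assumes eta: "\<eta> > 0" and lD: "l \<in> strat_simplex" and la: "l $ a > 0" and lb: "l $ b > 0"
    and Vab: "vfield U l b < vfield U l a"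
    and freq: "\<forall>\<beta>>0. \<forall>T. \<exists>t\<ge>T. dist (x t) l < \<beta>"
  shows False
proof -
  define A0 where "A0 = vfield U l a - vfield U l b"
  define A where "A = A0 / 2"
  have A: "A > 0" using Vab by (simp add: A_def A0_def)
  define \<mu> where "\<mu> = min (l $ a) (l $ b)"
  have \<mu>: "\<mu> > 0" using la lb by (simp add: \<mu>_def)
  define \<phi> where "\<phi> y = vfield U y a - vfield U y b" for y
  have c\<phi>: "continuous_on UNIV \<phi>" unfolding \<phi>_def vfield_sum by (intro continuous_intros)
  obtain \<beta>1 where \<beta>1: "\<beta>1 > 0" "\<forall>y. dist y l < \<beta>1 \<longrightarrow> dist (\<phi> y) (\<phi> l) < A"
    using c\<phi> A unfolding continuous_on_iff by (metis UNIV_I)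
  define \<beta> where "\<beta> = min \<beta>1 (\<mu>/2)"
  have \<beta>: "\<beta> > 0" using \<beta>1 \<mu> by (simp add: \<beta>_def)
  have compclose: "\<bar>y $ c - l $ c\<bar> \<le> dist y l" for y c
  proof -
    have "\<bar>(y - l) $ c\<bar> \<le> norm (y - l)" by (rule component_le_norm_cart)
    then show ?thesis by (simp add: dist_norm)
  qed
  have inb: "\<phi> y > A" "y $ a > \<mu>/2" "y $ b > \<mu>/2" if "dist y l < \<beta>" for y
  proof -
    have "dist (\<phi> y) (\<phi> l) < A" using \<beta>1 that by (simp add: \<beta>_def)
    moreover have "\<phi> l = 2 * A" by (simp add: \<phi>_def A_def A0_def)
    ultimately show "\<phi> y > A" by (simp add: dist_real_def abs_less_iff)
    have "dist y l < \<mu>/2" using that by (simp add: \<beta>_def)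
    then show "y $ a > \<mu>/2" "y $ b > \<mu>/2"
      using compclose[of y a] compclose[of y b] by (auto simp: \<mu>_def abs_le_iff)
  qed
  define K2 where "K2 = (deriv^^2) \<theta> (\<mu>/2)"
  have K2: "K2 > 0" unfolding K2_def using kernel_pos[OF ker] \<mu> by simp
  have K2b: "(deriv^^2) \<theta> z \<le> K2" if "\<mu>/2 \<le> z" for z
    unfolding K2_def using kernel_mono[OF ker _ that] \<mu> by simp
  obtain M3 where M3: "M3 \<ge> 0" "\<And>z. \<mu>/2 \<le> z \<Longrightarrow> z \<le> 1 \<Longrightarrow> \<bar>(deriv^^3) \<theta> z\<bar> \<le> M3"
  proof (cases "\<mu>/2 \<le> 1")
    case False then show ?thesis by (intro that[of 0]) auto
  next
    case True
    have "continuous_on {\<mu>/2..1} (\<lambda>z. \<bar>(deriv^^3) \<theta> z\<bar>)"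
    proof (intro continuous_at_imp_continuous_on ballI)
      fix z assume "z \<in> {\<mu>/2..1}"
      then have "z > 0" using \<mu> by simp
      then show "isCont (\<lambda>z. \<bar>(deriv^^3) \<theta> z\<bar>) z"
        using kernel_d3_cont[OF ker] by (intro continuous_intros) auto
    qed
    moreover have ne: "{\<mu>/2..1} \<noteq> {}" using True by simp
    ultimately obtain zm where "zm \<in> {\<mu>/2..1}" "\<forall>z\<in>{\<mu>/2..1}. \<bar>(deriv^^3) \<theta> z\<bar> \<le> \<bar>(deriv^^3) \<theta> zm\<bar>"
      using continuous_attains_sup[OF compact_Icc ne] by blast
    then show ?thesis by (intro that[of "\<bar>(deriv^^3) \<theta> zm\<bar>"]) auto
  qed
  define h where "h = 1 + 8 * K2 / A"
  have h: "h > 0" using K2 A by (simp add: h_def add_pos_nonneg)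
  define m where "m = (deriv^^2) \<theta> 1"
  have m: "m > 0" unfolding m_def by (rule kernel_pos[OF ker]) simp
  define C where "C = real CARD('n)"
  have C: "C > 0" by (simp add: C_def)
  define \<nu> where "\<nu> = min (min 1 (A / (4 * (M3 + 2 * \<eta> * K2 + 1)))) (\<beta> / (2 * (C * h) + 1))"
  have den1: "4 * (M3 + 2 * \<eta> * K2 + 1) > 0" using M3 eta K2 by (simp add: add_nonneg_pos)
  have den2: "2 * (C * h) + 1 > 0" using C h by (simp add: add_nonneg_pos)
  have \<nu>0: "\<nu> > 0" unfolding \<nu>_def using A \<beta> den1 den2 by simp
  have \<nu>1: "\<nu> \<le> 1" unfolding \<nu>_def by simp
  have \<nu>A: "(M3 + 2 * \<eta> * K2) * \<nu> \<le> A / 4"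
  proof -
    have "\<nu> \<le> A / (4 * (M3 + 2 * \<eta> * K2 + 1))" unfolding \<nu>_def by simp
    then have "\<nu> * (4 * (M3 + 2 * \<eta> * K2 + 1)) \<le> A" using den1 by (simp add: le_divide_eq)
    then show ?thesis using \<nu>0 by (simp add: algebra_simps)
  qed
  have \<nu>\<beta>: "C * h * \<nu> \<le> \<beta> / 2"
  proof -
    have "\<nu> \<le> \<beta> / (2 * (C * h) + 1)" unfolding \<nu>_def by simp
    then have "\<nu> * (2 * (C * h) + 1) \<le> \<beta>" using den2 by (simp add: le_divide_eq)
    then show ?thesis using \<nu>0 by (simp add: algebra_simps)
  qed
  obtain T where T: "T \<ge> 0" "\<forall>t\<ge>T. Sf \<theta> (x t) (v t) < m * \<nu>\<^sup>2"
    using S_to_0[OF eta, of "m * \<nu>\<^sup>2"] m \<nu>0 by auto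
  have vsmall: "\<bar>v t $ c\<bar> < \<nu>" if "t \<ge> T" for t c
  proof -
    have tt: "t \<ge> 0" using T that by simp
    have "m * (v t $ c)\<^sup>2 \<le> Sf \<theta> (x t) (v t)" unfolding m_def by (rule Sf_ge[OF tt])
    moreover have "Sf \<theta> (x t) (v t) < m * \<nu>\<^sup>2" using T(2) that by blast
    ultimately have "m * (v t $ c)\<^sup>2 < m * \<nu>\<^sup>2" by (rule le_less_trans)
    then have "(v t $ c)\<^sup>2 < \<nu>\<^sup>2" using m by (simp only: mult_less_cancel_left_pos)
    then have "\<bar>v t $ c\<bar>\<^sup>2 < \<nu>\<^sup>2" by (simp only: power2_abs)
    then show ?thesis by (rule power2_less_imp_less) (use \<nu>0 in simp)
  qed
  obtain t0 where t0: "t0 \<ge> T" "dist (x t0) l < \<beta>/2" using freq \<beta> by (meson half_gt_zero)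
  have t00: "t0 \<ge> 0" using t0 T by simp
  have inball: "dist (x t) l < \<beta>" if "t0 \<le> t" "t \<le> t0 + h" for t
  proof -
    have comp: "\<bar>x t $ c - x t0 $ c\<bar> \<le> \<nu> * h" for c
    proof -
      have "\<bar>x t $ c - x t0 $ c\<bar> \<le> \<nu> * (t - t0)"
        by (rule comp_move[OF t00 that(1)]) (use vsmall t0 in \<open>auto intro: less_imp_le\<close>)
      also have "\<dots> \<le> \<nu> * h" using that \<nu>0 by (intro mult_left_mono) auto
      finally show ?thesis .
    qed
    have "dist (x t) (x t0) \<le> (\<Sum>c\<in>UNIV. \<bar>(x t - x t0) $ c\<bar>)" unfolding dist_norm by (rule norm_le_l1_cart)
    also have "\<dots> \<le> (\<Sum>c\<in>(UNIV::'n set). \<nu> * h)" using comp by (intro sum_mono) simp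
    also have "\<dots> = C * h * \<nu>" by (simp add: C_def)
    also have "\<dots> \<le> \<beta>/2" by (rule \<nu>\<beta>)
    finally have "dist (x t) (x t0) \<le> \<beta>/2" .
    then show ?thesis using t0(2) dist_triangle[of "x t" l "x t0"] by linarith
  qed
  define Y where "Y c s = (deriv^^2) \<theta> (x s $ c) * v s $ c" for c s
  define D where "D s = Y a s - Y b s" for s
  have Ybound: "\<bar>Y c t\<bar> \<le> K2 * \<nu>" if "t0 \<le> t" "t \<le> t0 + h" "c = a \<or> c = b" for c t
  proof -
    have t0': "t \<ge> 0" "t \<ge> T" using that t00 t0 by auto
    have "x t $ c > \<mu>/2" using inb[OF inball[OF that(1,2)]] that(3) by auto
    then have "(deriv^^2) \<theta> (x t $ c) \<le> K2" by (intro K2b) simp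
    moreover have "(deriv^^2) \<theta> (x t $ c) > 0" by (rule th2pos[OF t0'(1)])
    ultimately have "(deriv^^2) \<theta> (x t $ c) * \<bar>v t $ c\<bar> \<le> K2 * \<nu>"
      using vsmall[OF t0'(2), of c] by (intro mult_mono) auto
    then show ?thesis using \<open>(deriv^^2) \<theta> (x t $ c) > 0\<close> by (simp add: Y_def abs_mult)
  qed
  have Dbound: "\<bar>D t\<bar> \<le> 2 * K2 * \<nu>" if "t0 \<le> t" "t \<le> t0 + h" for t
    using Ybound[OF that, of a] Ybound[OF that, of b] unfolding D_def by (simp add: abs_le_iff)
  define Dd where "Dd t = \<phi> (x t) + (1/2) * (deriv^^3) \<theta> (x t $ a) * (v t $ a)\<^sup>2
       - (1/2) * (deriv^^3) \<theta> (x t $ b) * (v t $ b)\<^sup>2 - \<eta> * D t" for t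
  have dD: "(D has_real_derivative Dd t) (at t within {0..})" if "t \<ge> 0" for t
  proof -
    have "(D has_real_derivative
       (vfield U (x t) a + (1/2) * (deriv^^3) \<theta> (x t $ a) * (v t $ a)\<^sup>2 - \<eta> * ((deriv^^2) \<theta> (x t $ a) * v t $ a) + lam t)
     - (vfield U (x t) b + (1/2) * (deriv^^3) \<theta> (x t $ b) * (v t $ b)\<^sup>2 - \<eta> * ((deriv^^2) \<theta> (x t $ b) * v t $ b) + lam t))
       (at t within {0..})"
      unfolding D_def Y_def by (rule DERIV_diff[OF dY[OF that] dY[OF that]])
    then show ?thesis by (simp add: Dd_def \<phi>_def D_def Y_def algebra_simps)
  qed
  have Dlow: "A/2 \<le> Dd t" if "t0 \<le> t" "t \<le> t0 + h" for t
  proof -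
    have t0': "t \<ge> 0" "t \<ge> T" using that t00 t0 by auto
    have xa: "x t $ a > \<mu>/2" using inb[OF inball[OF that]] by auto
    have va: "(v t $ a)\<^sup>2 \<le> \<nu>\<^sup>2"
    proof -
      have "\<bar>v t $ a\<bar>\<^sup>2 \<le> \<nu>\<^sup>2" using vsmall[OF t0'(2), of a] by (intro power_mono) auto
      then show ?thesis by simp
    qed
    have "\<bar>(deriv^^3) \<theta> (x t $ a)\<bar> \<le> M3" using M3(2) xa le1[OF t0'(1)] by simp
    then have "\<bar>(deriv^^3) \<theta> (x t $ a)\<bar> * (v t $ a)\<^sup>2 \<le> M3 * \<nu>\<^sup>2"
      using va M3(1) by (intro mult_mono) auto
    then have t1: "(1/2) * (deriv^^3) \<theta> (x t $ a) * (v t $ a)\<^sup>2 \<ge> - (M3 * \<nu>)"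
    proof -
      assume H: "\<bar>(deriv^^3) \<theta> (x t $ a)\<bar> * (v t $ a)\<^sup>2 \<le> M3 * \<nu>\<^sup>2"
      have "M3 * \<nu>\<^sup>2 \<le> M3 * \<nu>" using M3(1) \<nu>0 \<nu>1 by (intro mult_left_mono) (auto simp: power2_eq_square mult_le_cancel_right1)
      moreover have "- (\<bar>(deriv^^3) \<theta> (x t $ a)\<bar> * (v t $ a)\<^sup>2) \<le> (deriv^^3) \<theta> (x t $ a) * (v t $ a)\<^sup>2"
      proof -
        have "(- \<bar>(deriv^^3) \<theta> (x t $ a)\<bar>) * (v t $ a)\<^sup>2 \<le> (deriv^^3) \<theta> (x t $ a) * (v t $ a)\<^sup>2"
          by (rule mult_right_mono) auto
        then show ?thesis by simp
      qed
      ultimately have P: "- (M3 * \<nu>) \<le> (deriv^^3) \<theta> (x t $ a) * (v t $ a)\<^sup>2" using H by linarith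
      have "0 \<le> M3 * \<nu>" using M3(1) \<nu>0 by simp
      moreover have "(1/2) * (deriv^^3) \<theta> (x t $ a) * (v t $ a)\<^sup>2 = (1/2) * ((deriv^^3) \<theta> (x t $ a) * (v t $ a)\<^sup>2)"
        by simp
      ultimately show ?thesis using P by linarith
    qed
    have t2: "(deriv^^3) \<theta> (x t $ b) * (v t $ b)\<^sup>2 \<le> 0"
    proof -
      have "(deriv^^3) \<theta> (x t $ b) \<le> 0" using kernel_neg3[OF ker pos[OF t0'(1)], of b] by simp
      then show ?thesis by (rule mult_nonpos_nonneg) simp
    qed
    have t3: "\<eta> * D t \<le> \<eta> * (2 * K2 * \<nu>)"
      using Dbound[OF that] eta by (intro mult_left_mono) (auto simp: abs_le_iff)
    have t4: "\<phi> (x t) > A" using inb[OF inball[OF that]] by auto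
    have "M3 * \<nu> + \<eta> * (2 * K2 * \<nu>) \<le> A / 4" using \<nu>A by (simp add: algebra_simps)
    moreover have e: "(1/2) * (deriv^^3) \<theta> (x t $ a) * (v t $ a)\<^sup>2 = (1/2) * ((deriv^^3) \<theta> (x t $ a) * (v t $ a)\<^sup>2)"
       "(1/2) * (deriv^^3) \<theta> (x t $ b) * (v t $ b)\<^sup>2 = (1/2) * ((deriv^^3) \<theta> (x t $ b) * (v t $ b)\<^sup>2)"
      by simp_all
    moreover have "\<eta> * (2 * K2 * \<nu>) = 2 * (\<eta> * K2 * \<nu>)" "M3 * \<nu> + \<eta> * (2 * K2 * \<nu>) = M3 * \<nu> + 2 * (\<eta> * K2 * \<nu>)"
      by simp_all
    ultimately show ?thesis using t1 t2 t3 t4 A unfolding e Dd_def by linarith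
  qed
  have "A/2 * (t0 + h - t0) \<le> D (t0 + h) - D t0"
  proof (rule deriv_ge[where f = D and f' = Dd, OF t00])
    show "t0 \<le> t0 + h" using h by simp
    fix t assume "t0 \<le> t" "t \<le> t0 + h"
    then show "(D has_real_derivative Dd t) (at t within {0..})" using dD t00 by simp
    show "A/2 \<le> Dd t" using Dlow \<open>t0 \<le> t\<close> \<open>t \<le> t0 + h\<close> by blast
  qed
  moreover have "\<bar>D (t0 + h)\<bar> \<le> 2 * K2 * \<nu>" "\<bar>D t0\<bar> \<le> 2 * K2 * \<nu>" using Dbound h by auto
  moreover have "K2 * \<nu> \<le> K2" using K2 \<nu>1 by (simp add: mult_le_cancel_left1)
  moreover have "A/2 * (t0 + h - t0) = A/2 + 4 * K2" using A by (simp add: h_def field_simps)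
  ultimately show False using A by (simp add: abs_le_iff)
qed

end


lemma payoff_sym:
  assumes "transpose U = U" shows "payoff U p q = payoff U q p"
proof -
  have s: "U $ b $ a = U $ a $ b" for a b
  proof -
    have "(transpose U) $ a $ b = U $ b $ a" by (simp add: transpose_def)
    then show ?thesis using assms by simp
  qed
  have "payoff U p q = (\<Sum>a\<in>UNIV. \<Sum>b\<in>UNIV. p$a * U$a$b * q$b)" by (rule payoff_sum)
  also have "\<dots> = (\<Sum>b\<in>UNIV. \<Sum>a\<in>UNIV. p$a * U$a$b * q$b)" by (rule sum.swap)
  also have "\<dots> = (\<Sum>b\<in>UNIV. \<Sum>a\<in>UNIV. q$b * U$b$a * p$a)"
    by (intro sum.cong refl) (simp add: s mult_ac)
  also have "\<dots> = payoff U q p" by (rule payoff_sum[symmetric])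
  finally show ?thesis .
qed

lemma F_strict:
  assumes sym: "transpose U = U" and xsD: "xs \<in> strat_simplex"
    and sup: "\<forall>y\<in>strat_simplex. 0 < dist y xs \<and> dist y xs < \<rho> \<longrightarrow> payoff U y y < payoff U xs y"
    and yD: "y \<in> strat_simplex" and d: "0 < dist y xs" "dist y xs < \<rho>"
  shows "payoff U y y < payoff U xs xs"
proof -
  define z where "z = xs - y"
  define m where "m = (1 - 1/2) *\<^sub>R y + (1/2) *\<^sub>R xs"
  have mD: "m \<in> strat_simplex" unfolding m_def by (rule simplex_comb[OF yD xsD]) auto
  have mz: "m = y + (1/2) *\<^sub>R z" by (simp add: m_def z_def vec_eq_iff field_simps)
  have xsz: "xs = y + z" by (simp add: z_def)
  have dm: "dist m xs = dist y xs / 2"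
  proof -
    have "m - xs = (1/2) *\<^sub>R (y - xs)" by (simp add: m_def vec_eq_iff field_simps)
    then show ?thesis by (simp add: dist_norm)
  qed
  have dm2: "0 < dist m xs" "dist m xs < \<rho>" using d dm by linarith+
  have "payoff U m m < payoff U xs m" using sup mD dm2 by blast
  moreover have "payoff U xs m - payoff U m m = (1/2) * payoff U z y + (1/4) * payoff U z z"
    unfolding mz xsz
    by (simp add: payoff_add_left payoff_add_right payoff_scale_left payoff_scale_right algebra_simps)
  moreover have "payoff U xs xs - payoff U y y = 2 * payoff U z y + payoff U z z"
    unfolding xsz using payoff_sym[OF sym, of y z]
    by (simp add: payoff_add_left payoff_add_right algebra_simps)
  ultimately show ?thesis by linarith
qed

lemma nonrest:
  assumes lD: "l \<in> strat_simplex" and xsD: "xs \<in> strat_simplex"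
    and sup: "payoff U l l < payoff U xs l" and supp: "\<And>a. xs $ a > 0 \<Longrightarrow> l $ a > 0"
  shows "\<exists>a b. l $ a > 0 \<and> l $ b > 0 \<and> vfield U l b < vfield U l a"
proof (rule ccontr)
  assume "\<not> ?thesis"
  then have le: "vfield U l a \<le> vfield U l b" if "l $ a > 0" "l $ b > 0" for a b
    using that by (meson not_less)
  obtain a0 where a0: "l $ a0 > 0" using simplex_exists_pos[OF lD] by blast
  define c where "c = vfield U l a0"
  have eq: "vfield U l a = c" if "l $ a > 0" for a
    using le[OF that a0] le[OF a0 that] by (simp add: c_def)
  have "payoff U l l = (\<Sum>a\<in>UNIV. l $ a * c)"
    unfolding payoff_vfield
  proof (intro sum.cong refl)
    fix a
    show "l $ a * vfield U l a = l $ a * c"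
    proof (cases "l $ a > 0")
      case True then show ?thesis using eq by simp
    next
      case False then have "l $ a = 0" using lD by (simp add: strat_simplex_def) (meson not_less order.antisym)
      then show ?thesis by simp
    qed
  qed
  also have "\<dots> = c" using lD by (simp add: strat_simplex_def sum_distrib_right[symmetric])
  finally have e1: "payoff U l l = c" .
  have "payoff U xs l = (\<Sum>a\<in>UNIV. xs $ a * c)"
    unfolding payoff_vfield
  proof (intro sum.cong refl)
    fix a
    show "xs $ a * vfield U l a = xs $ a * c"
    proof (cases "xs $ a > 0")
      case True then show ?thesis using eq supp by simp
    next
      case False then have "xs $ a = 0" using xsD by (simp add: strat_simplex_def) (meson not_less order.antisym)
      then show ?thesis by simp
    qed
  qed
  also have "\<dots> = c" using xsD by (simp add: strat_simplex_def sum_distrib_right[symmetric])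
  finally have e2: "payoff U xs l = c" .
  show False using sup e1 e2 by simp
qed

lemma (in traj) x_cont: "continuous_on {0..} x"
proof -
  have "continuous (at t within {0..}) x" if "t \<in> {0..}" for t
    using sol that unfolding ID_solution_def by (meson atLeast_iff has_vector_derivative_continuous)
  then show ?thesis using continuous_on_eq_continuous_within by blast
qed


theorem proposition4p7:
  fixes \<theta> :: "real \<Rightarrow> real" and U :: "real ^ 'n::finite ^ 'n"
    and \<eta> :: real and xs :: "real ^ 'n"
  assumes "kernel \<theta>"
    and "transpose U = U"
    and "\<eta> > 0"
    and "\<forall>x0\<in>strat_simplex_int. \<forall>v0 :: real ^ 'n. (\<Sum>a\<in>UNIV. v0 $ a) = 0 \<longrightarrow>
           (\<exists>x v. ID_solution \<theta> U \<eta> x v \<and> x 0 = x0 \<and> v 0 = v0)"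
    and "ESS U xs"
  shows "\<exists>\<delta>>0. \<exists>\<epsilon>>0. \<forall>x v. ID_solution \<theta> U \<eta> x v \<and> dist (x 0) xs < \<delta>
           \<and> speed \<theta> (x 0) (v 0) < \<epsilon> \<longrightarrow> (x \<longlongrightarrow> xs) at_top"
proof -
  note ker = assms(1) and sym = assms(2) and eta = assms(3) and ess = assms(5)
  have xsD: "xs \<in> strat_simplex" using ess unfolding ESS_def by blast
  obtain \<rho>s where \<rho>s: "\<rho>s > 0"
    and sup: "\<forall>y\<in>strat_simplex. 0 < dist y xs \<and> dist y xs < \<rho>s \<longrightarrow> payoff U y y < payoff U xs y"
    using ESS_superior[OF ess] by blast
  define P where "P = {a. xs $ a > 0}"
  have Pne: "P \<noteq> {}" using simplex_exists_pos[OF xsD] by (auto simp: P_def)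
  define \<mu> where "\<mu> = Min ((\<lambda>a. xs $ a) ` P)"
  have \<mu>pos: "\<mu> > 0" unfolding \<mu>_def using Pne by (auto simp: P_def)
  have \<mu>le: "\<mu> \<le> xs $ a" if "xs $ a > 0" for a
    unfolding \<mu>_def using that by (intro Min_le) (auto simp: P_def)
  define r where "r = min \<rho>s \<mu> / 2"
  have r: "r > 0" "r < \<rho>s" "r < \<mu>" using \<rho>s \<mu>pos by (auto simp: r_def)
  define g where "g y = payoff U xs xs - payoff U y y" for y
  have cg: "continuous_on UNIV g" unfolding g_def by (intro continuous_intros cont_payoff)
  obtain \<gamma> where \<gamma>: "\<gamma> > 0" "\<forall>y\<in>strat_simplex. dist y xs = r \<longrightarrow> \<gamma> \<le> g y"
  proof (cases "strat_simplex \<inter> {y. dist y xs = r} = {}")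
    case True then show ?thesis by (intro that[of 1]) auto
  next
    case False
    have "compact (strat_simplex \<inter> {y. dist y xs = r})"
      by (intro compact_Int_closed simplex_compact closed_Collect_eq continuous_intros)
    then obtain y0 where y0: "y0 \<in> strat_simplex \<inter> {y. dist y xs = r}"
      "\<forall>y\<in>strat_simplex \<inter> {y. dist y xs = r}. g y0 \<le> g y"
      using continuous_attains_inf[OF _ False continuous_on_subset[OF cg]] by blast
    have "g y0 > 0" unfolding g_def
      using F_strict[OF sym xsD sup, of y0] y0(1) r by auto
    then show ?thesis using y0 by (intro that[of "g y0"]) auto
  qed
  have cF: "continuous_on UNIV (\<lambda>y. payoff U y y)" by (intro cont_payoff continuous_intros)
  obtain \<delta>0 where \<delta>0: "\<delta>0 > 0" "\<forall>y. dist y xs < \<delta>0 \<longrightarrow> dist (payoff U y y) (payoff U xs xs) < \<gamma>/2"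
    using cF \<gamma>(1) unfolding continuous_on_iff by (metis UNIV_I half_gt_zero)
  define \<delta> where "\<delta> = min \<delta>0 r"
  define \<epsilon> where "\<epsilon> = sqrt (\<gamma>/2)"
  have \<delta>pos: "\<delta> > 0" using \<delta>0 r by (simp add: \<delta>_def)
  have \<epsilon>pos: "\<epsilon> > 0" using \<gamma> by (simp add: \<epsilon>_def)
  have main: "\<forall>x v. ID_solution \<theta> U \<eta> x v \<and> dist (x 0) xs < \<delta>
           \<and> speed \<theta> (x 0) (v 0) < \<epsilon> \<longrightarrow> (x \<longlongrightarrow> xs) at_top"
  proof (intro allI impI)
    fix x v assume H: "ID_solution \<theta> U \<eta> x v \<and> dist (x 0) xs < \<delta> \<and> speed \<theta> (x 0) (v 0) < \<epsilon>"
    interpret traj \<theta> U \<eta> x v using H ker sym by unfold_locales auto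
    have S0: "Sf \<theta> (x 0) (v 0) < \<gamma>/2"
    proof -
      have "speed \<theta> (x 0) (v 0) = sqrt (Sf \<theta> (x 0) (v 0))" by (simp add: speed_def Sf_def)
      then show ?thesis using H by (simp add: \<epsilon>_def)
    qed
    have F0: "payoff U (x 0) (x 0) > payoff U xs xs - \<gamma>/2"
    proof -
      have "dist (x 0) xs < \<delta>0" using H by (simp add: \<delta>_def)
      then have "dist (payoff U (x 0) (x 0)) (payoff U xs xs) < \<gamma>/2" using \<delta>0 by blast
      then have "\<bar>payoff U (x 0) (x 0) - payoff U xs xs\<bar> < \<gamma>/2" by (simp only: dist_real_def)
      then show ?thesis by (simp only: abs_less_iff) linarith
    qed
    have Flow: "payoff U (x t) (x t) > payoff U xs xs - \<gamma>" if "t \<ge> 0" for t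
    proof -
      have "En t \<le> En 0" by (rule En_mono[OF eta order.refl that])
      then show ?thesis using S0 F0 Sf_nonneg[OF that] unfolding En_def by linarith
    qed
    have conf: "dist (x t) xs < r" if tnn: "t \<ge> 0" for t
    proof (rule ccontr)
      assume "\<not> dist (x t) xs < r"
      then have rt: "r \<le> dist (x t) xs" by simp
      have "continuous_on {0..t} (\<lambda>s. dist (x s) xs)"
        by (intro continuous_intros continuous_on_subset[OF x_cont]) auto
      moreover have "dist (x 0) xs \<le> r" using H by (simp add: \<delta>_def)
      ultimately obtain s where s: "0 \<le> s" "s \<le> t" "dist (x s) xs = r"
        using IVT'[of "\<lambda>s. dist (x s) xs" 0 r t] rt tnn by auto
      then have "\<gamma> \<le> g (x s)" using \<gamma>(2) in_simplex[OF s(1)] by blast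
      then show False using Flow[OF s(1)] by (simp add: g_def)
    qed
    show "(x \<longlongrightarrow> xs) at_top"
    proof (rule ccontr)
      assume nc: "\<not> (x \<longlongrightarrow> xs) at_top"
      then obtain e where e: "e > 0" "\<not> eventually (\<lambda>t. dist (x t) xs < e) at_top"
        unfolding tendsto_iff by blast
      have ex: "\<exists>t. t \<ge> N \<and> e \<le> dist (x t) xs" for N :: real
        using e(2) unfolding eventually_at_top_linorder by (meson not_less)
      define tk where "tk n = (SOME t. t \<ge> real n \<and> e \<le> dist (x t) xs)" for n :: nat
      have tk: "tk n \<ge> real n" "e \<le> dist (x (tk n)) xs" for n
        using someI_ex[OF ex[of "real n"]] unfolding tk_def by auto
      have tk0: "tk n \<ge> 0" for n using tk(1)[of n] by linarith
      have "\<forall>n. x (tk n) \<in> strat_simplex" using in_simplex tk0 by blast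
      then obtain l rr where lD: "l \<in> strat_simplex" and rr: "strict_mono rr"
        and lim: "((\<lambda>n. x (tk n)) \<circ> rr) \<longlonglongrightarrow> l"
        using seq_compactE[OF compact_imp_seq_compact[OF simplex_compact]] by metis
      have lim': "(\<lambda>n. x (tk (rr n))) \<longlonglongrightarrow> l" using lim by (simp add: o_def)
      have dlim: "(\<lambda>n. dist (x (tk (rr n))) xs) \<longlonglongrightarrow> dist l xs"
        by (intro tendsto_dist lim' tendsto_const)
      have le: "e \<le> dist l xs" by (rule LIMSEQ_le_const[OF dlim]) (use tk in auto)
      have ge: "dist l xs \<le> r" by (rule LIMSEQ_le_const2[OF dlim]) (use conf tk0 in \<open>auto intro: less_imp_le\<close>)
      have freq: "\<forall>\<beta>>0. \<forall>T. \<exists>t\<ge>T. dist (x t) l < \<beta>"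
      proof (intro allI impI)
        fix \<beta> :: real and T :: real assume \<beta>: "\<beta> > 0"
        obtain N where N: "\<forall>n\<ge>N. dist (x (tk (rr n))) l < \<beta>"
          using lim' \<beta> unfolding tendsto_iff eventually_sequentially by blast
        define n where "n = max N (nat \<lceil>T\<rceil>)"
        have "real n \<ge> T" unfolding n_def by linarith
        moreover have "real (rr n) \<ge> real n" using seq_suble[OF rr, of n] by simp
        ultimately have "tk (rr n) \<ge> T" using tk(1)[of "rr n"] by linarith
        moreover have "dist (x (tk (rr n))) l < \<beta>" using N by (simp add: n_def)
        ultimately show "\<exists>t\<ge>T. dist (x t) l < \<beta>" by blast
      qed
      have supl: "payoff U l l < payoff U xs l" using sup lD le ge e r by auto
      have supp: "l $ a > 0" if "xs $ a > 0" for a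
      proof -
        have "\<bar>(l - xs) $ a\<bar> \<le> norm (l - xs)" by (rule component_le_norm_cart)
        then have "\<bar>l $ a - xs $ a\<bar> \<le> r" using ge by (simp add: dist_norm)
        then show ?thesis using \<mu>le[OF that] r by linarith
      qed
      obtain a b where ab: "l $ a > 0" "l $ b > 0" "vfield U l b < vfield U l a"
        using nonrest[OF lD xsD supl supp] by blast
      show False by (rule no_nonrest_limit[OF eta lD ab freq])
    qed
  qed
  show ?thesis using \<delta>pos \<epsilon>pos main by blast
qed


end
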